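(* Let $p>3$ be prime. For $t\in\mathbb{Z}/p\mathbb{Z}$ put $a_t(p)=-\sum_{x\bmod p}\left(\frac{x^3+t^2}{p}\right)$ and $A_2(p)=\sum_{t\bmod p}a_t(p)^2$. Then $A_2(p)=2p^2-2p$ if $p\equiv 1\pmod 3$, and $A_2(p)=0$ if $p\equiv 2 \pmod 3$.
   Context: $\left(\frac{\cdot}{p}\right)$ denotes the Legendre symbol (equal to $0$ at multiples of $p$). *)

theory Defs
  imports "HOL-Number_Theory.Number_Theory"
begin

definition a_coef :: "int \<Rightarrow> int \<Rightarrow> int" where
  "a_coef p t = - (\<Sum>x\<in>{0..p-1}. Legendre (x^3 + t^2) p)"

definition A2 :: "int \<Rightarrow> int" where
  "A2 p = (\<Sum>t\<in>{0..p-1}. (a_coef p t)^2)"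

end

theory Submission
  imports Defs
begin


locale pctx =
  fixes p :: int
  assumes pp: "prime p" and p3: "p > 3"
begin

definition chi :: "int \<Rightarrow> int" where "chi x = Legendre x p"
definition R :: "int set" where "R = {0..p-1}"
definition k2 :: nat where "k2 = nat ((p - 1) div 2)"

lemma finR[simp]: "finite R" by (simp add: R_def)
lemma cardR: "card R = nat p" using p3 by (simp add: R_def)

lemma euler: "[chi a = a ^ k2] (mod p)"
proof -
  have "prime (nat p)" "2 < nat p" using pp p3 by auto
  from euler_criterion[OF this, of a] show ?thesis
    using p3 unfolding chi_def k2_def by (simp add: nat_diff_distrib nat_div_distrib)
qed

lemma chi_vals: "chi a = 0 \<or> chi a = 1 \<or> chi a = -1"
  unfolding chi_def Legendre_def by auto

lemma chi_0_iff: "chi a = 0 \<longleftrightarrow> p dvd a"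
  unfolding chi_def Legendre_def by (auto simp: cong_0_iff)

lemma small_cong_eq:
  assumes "[u = v] (mod p)" "\<bar>u\<bar> \<le> 1" "\<bar>v\<bar> \<le> 1"
  shows "u = v"
proof -
  have "p dvd (u - v)" using assms(1) by (simp add: cong_iff_dvd_diff)
  then obtain k where k: "u - v = p * k" by (auto elim: dvdE)
  have "\<bar>u - v\<bar> \<le> 2" using assms by linarith
  show ?thesis
  proof (rule ccontr)
    assume "u \<noteq> v"
    then have "k \<noteq> 0" using k by auto
    then have "\<bar>p * k\<bar> \<ge> p" using p3 by (simp add: abs_mult)
    with k \<open>\<bar>u - v\<bar> \<le> 2\<close> p3 show False by linarith
  qed
qed

lemma chi_abs: "\<bar>chi a\<bar> \<le> 1" using chi_vals[of a] by auto

lemma chi_mult: "chi (a * b) = chi a * chi b"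
proof -
  have "[chi (a*b) = (a*b)^k2] (mod p)" by (rule euler)
  also have "(a*b)^k2 = a^k2 * b^k2" by (simp add: power_mult_distrib)
  also have "[a^k2 * b^k2 = chi a * chi b] (mod p)"
    using euler[of a] euler[of b] by (intro cong_mult) (auto simp: cong_sym)
  finally show ?thesis
    by (rule small_cong_eq) (use chi_vals[of a] chi_vals[of b] chi_vals[of "a*b"] in auto)
qed

lemma chi_cong:
  assumes h: "[a = b] (mod p)" shows "chi a = chi b"
proof -
  have 1: "[a = 0] (mod p) \<longleftrightarrow> [b = 0] (mod p)" using h cong_sym cong_trans by blast
  have 2: "QuadRes p a \<longleftrightarrow> QuadRes p b" unfolding QuadRes_def using h by (meson cong_sym cong_trans)
  show ?thesis unfolding chi_def Legendre_def using 1 2 by simp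
qed

lemma chi_mod[simp]: "chi (a mod p) = chi a"
  by (rule chi_cong) simp

lemma chi_1[simp]: "chi 1 = 1"
  unfolding chi_def Legendre_def QuadRes_def using p3
  by (auto simp: cong_def intro!: exI[of _ 1])

lemma chi_sq_nz: "\<not> p dvd a \<Longrightarrow> chi a * chi a = 1"
  using chi_vals[of a] chi_0_iff[of a] by auto

lemma chi_cube: "chi (a^3) = chi a"
proof -
  have "a^3 = a * (a * a)" by (simp add: power3_eq_cube)
  then show ?thesis using chi_vals[of a] by (auto simp: chi_mult)
qed

lemma pow_pm1: "\<not> p dvd a \<Longrightarrow> [a ^ (2*k2) = 1] (mod p)"
proof -
  assume "\<not> p dvd a"
  have "[a ^ (2*k2) = a^k2 * a^k2] (mod p)" by (simp add: power_add mult_2)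
  also have "[a^k2 * a^k2 = chi a * chi a] (mod p)"
    using euler[of a] by (intro cong_mult) (auto simp: cong_sym)
  finally show ?thesis using chi_sq_nz[OF \<open>\<not> p dvd a\<close>] by simp
qed

lemma two_k2: "int (2 * k2) = p - 1"
proof -
  have "odd p" using pp p3 prime_odd_int[of p] by auto
  then obtain m where "p = 2*m+1" by (auto elim!: oddE)
  then show ?thesis unfolding k2_def using p3 by simp
qed

end


context pctx begin

lemma reindex:
  assumes per: "\<And>x. f (x mod p) = f x" and cop: "\<not> p dvd a"
  shows "(\<Sum>x\<in>R. f (a*x+b)) = (\<Sum>x\<in>R. f x)"
proof -
  define h where "h x = (a*x+b) mod p" for x
  have sub: "h ` R \<subseteq> R" using p3 by (auto simp: h_def R_def)
  have inj: "inj_on h R"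
  proof
    fix x y assume x: "x \<in> R" and y: "y \<in> R" and e: "h x = h y"
    then have "[a*x+b = a*y+b] (mod p)" by (simp add: h_def cong_def)
    then have "p dvd a*(x-y)" by (simp add: cong_iff_dvd_diff algebra_simps)
    then have "p dvd (x-y)" using cop pp by (simp add: prime_dvd_mult_iff)
    then have "[x = y] (mod p)" by (simp add: cong_iff_dvd_diff)
    then show "x = y" using x y by (simp add: R_def cong_def)
  qed
  have im: "h ` R = R" by (rule endo_inj_surj[OF finR sub inj])
  have "(\<Sum>x\<in>R. f (a*x+b)) = (\<Sum>x\<in>R. f (h x))"
    by (simp add: h_def per)
  also have "\<dots> = (\<Sum>x\<in>h ` R. f x)" by (simp add: sum.reindex[OF inj])
  also have "\<dots> = (\<Sum>x\<in>R. f x)" using im by simp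
  finally show ?thesis .
qed

lemma primroot: "\<exists>g. \<not> p dvd g \<and> (\<forall>k. 0 < k \<and> k < nat (p-1) \<longrightarrow> \<not> [g^k = 1] (mod p))"
proof -
  define n where "n = nat p"
  have pn: "p = int n" using p3 by (simp add: n_def)
  have "prime n" using pp pn by simp
  then obtain g where g: "residue_primroot n g" using prime_primitive_root_exists[of n] prime_gt_1_nat[of n] by blast
  then have cop: "coprime n g" and ordg: "ord n g = n - 1"
    by (auto simp: residue_primroot_def totient_prime[OF \<open>prime n\<close>])
  have nd: "\<not> p dvd int g"
  proof
    assume "p dvd int g"
    then have "n dvd g" using pn by simp
    then have "n dvd gcd n g" by simp
    then show False using cop \<open>prime n\<close> by (simp add: prime_gt_1_nat)
  qed
  have "\<not> [int g ^ k = 1] (mod p)" if "0 < k" "k < nat (p-1)" for k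
  proof
    assume "[int g ^ k = 1] (mod p)"
    then have "[g ^ k = 1] (mod n)" using pn by (metis cong_int_iff of_nat_1 of_nat_power)
    moreover have "k < ord n g" using that ordg pn by simp
    ultimately show False using ord_minimal[of k n g] that by simp
  qed
  then show ?thesis using nd by blast
qed

lemma nonres: "\<exists>g. chi g = -1"
proof -
  obtain g where nd: "\<not> p dvd g" and h: "\<And>k. 0 < k \<Longrightarrow> k < nat (p-1) \<Longrightarrow> \<not> [g^k = 1] (mod p)"
    using primroot by blast
  have "0 < k2" "k2 < nat (p-1)" using two_k2 p3 by auto
  then have "\<not> [g^k2 = 1] (mod p)" using h by blast
  then have "chi g \<noteq> 1" using euler[of g] by (auto dest: cong_sym)
  moreover have "chi g \<noteq> 0" using nd chi_0_iff by simp
  ultimately show ?thesis using chi_vals[of g] by blast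
qed

lemma chi_sum: "(\<Sum>x\<in>R. chi x) = 0"
proof -
  obtain g where g: "chi g = -1" using nonres by blast
  then have nd: "\<not> p dvd g" using chi_0_iff[of g] by auto
  have "(\<Sum>x\<in>R. chi x) = (\<Sum>x\<in>R. chi (g*x+0))"
    by (rule reindex[symmetric]) (use nd in auto)
  also have "\<dots> = - (\<Sum>x\<in>R. chi x)" by (simp add: chi_mult g sum_negf)
  finally show ?thesis by simp
qed

lemma chi_sum_shift: "(\<Sum>x\<in>R. chi (x + b)) = 0"
  using reindex[of chi 1 b] chi_sum p3 by auto

end


context pctx begin

definition C :: "int \<Rightarrow> int" where "C d = (\<Sum>s\<in>R. chi s * chi (s + d))"

lemma chi_sq_R: "s \<in> R \<Longrightarrow> chi s * chi s = (if s = 0 then 0 else 1)"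
proof -
  assume s: "s \<in> R"
  show ?thesis
  proof (cases "s = 0")
    case True then show ?thesis using chi_0_iff[of 0] by simp
  next
    case False
    then have "\<not> p dvd s" using s by (auto simp: R_def zdvd_not_zless dest: zdvd_imp_le)
    then show ?thesis using chi_sq_nz False by simp
  qed
qed

lemma C_0: assumes "[d = 0] (mod p)" shows "C d = p - 1"
proof -
  have "C d = (\<Sum>s\<in>R. chi s * chi s)" unfolding C_def
    by (intro sum.cong refl) (metis assms chi_cong cong_add_lcancel_0)
  also have "\<dots> = (\<Sum>s\<in>R. if s = 0 then 0 else 1)" by (intro sum.cong refl) (simp add: chi_sq_R)
  also have "\<dots> = int (card (R - {0}))"
  proof -
    have "R \<inter> {0} = {0}" using p3 by (auto simp: R_def)
    then show ?thesis by (simp add: sum.If_cases Diff_eq)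
  qed
  also have "\<dots> = p - 1" using cardR p3 by (simp add: R_def)
  finally show ?thesis .
qed

lemma C_scale: assumes nd: "\<not> p dvd d" shows "C d = C 1"
proof -
  have "C d = (\<Sum>s\<in>R. chi (d*s+0) * chi ((d*s+0) + d))" unfolding C_def
    by (rule reindex[symmetric, OF _ nd]) (metis chi_cong chi_mod cong_add_rcancel cong_mod_left cong_refl)
  also have "\<dots> = C 1" unfolding C_def
  proof (intro sum.cong refl)
    fix s
    have "chi (d*s+0) * chi ((d*s+0) + d) = chi d * chi d * (chi s * chi (s+1))"
      by (simp add: chi_mult[symmetric] algebra_simps)
    then show "chi (d*s+0) * chi ((d*s+0) + d) = chi s * chi (s + 1)"
      using chi_sq_nz[OF nd] by simp
  qed
  finally show ?thesis .
qed

lemma C_sum: "(\<Sum>d\<in>R. C d) = 0"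
proof -
  have "(\<Sum>d\<in>R. C d) = (\<Sum>s\<in>R. chi s * (\<Sum>d\<in>R. chi (d + s)))"
    unfolding C_def by (subst sum.swap) (simp add: sum_distrib_left add.commute)
  also have "\<dots> = 0" by (simp add: chi_sum_shift)
  finally show ?thesis .
qed

lemma C_1: "C 1 = -1"
proof -
  have "(\<Sum>d\<in>R. C d) = C 0 + (\<Sum>d\<in>R - {0}. C d)"
    by (subst sum.remove[of R 0]) (use p3 in \<open>auto simp: R_def\<close>)
  also have "(\<Sum>d\<in>R - {0}. C d) = (\<Sum>d\<in>R - {0}. C 1)"
  proof (intro sum.cong refl)
    fix d assume "d \<in> R - {0}"
    then have "\<not> p dvd d" by (auto simp: R_def zdvd_not_zless dest: zdvd_imp_le)
    then show "C d = C 1" by (rule C_scale)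
  qed
  also have "\<dots> = (p - 1) * C 1" using cardR p3 by (simp add: R_def)
  finally have "0 = (p - 1) + (p - 1) * C 1" using C_sum C_0[of 0] by simp
  moreover have "(p - 1) * (C 1 + 1) = (p - 1) * C 1 + (p - 1)" by (simp add: distrib_left)
  ultimately have "(p - 1) * (C 1 + 1) = 0" by linarith
  then show ?thesis using p3 by simp
qed

lemma C_gen: "(\<Sum>s\<in>R. chi (s + A) * chi (s + B)) = (if [A = B] (mod p) then p - 1 else -1)"
proof -
  have "(\<Sum>s\<in>R. chi (s + A) * chi (s + B)) = (\<Sum>s\<in>R. chi (1*s+A) * chi ((1*s+A) + (B - A)))"
    by simp
  also have "\<dots> = C (B - A)" unfolding C_def
    by (rule reindex) (use p3 in \<open>auto intro: chi_cong simp: cong_add_rcancel\<close>)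
  also have "\<dots> = (if [A = B] (mod p) then p - 1 else -1)"
  proof (cases "[A = B] (mod p)")
    case True
    then have "[B - A = 0] (mod p)" by (simp add: cong_iff_dvd_diff dvd_diff_commute)
    then show ?thesis using True C_0 by simp
  next
    case False
    then have "\<not> p dvd (B - A)" by (simp add: cong_iff_dvd_diff dvd_diff_commute)
    then show ?thesis using False C_scale C_1 by simp
  qed
  finally show ?thesis .
qed

end


context pctx begin

lemma R_dvd: "t \<in> R \<Longrightarrow> p dvd t \<Longrightarrow> t = 0"
  by (auto simp: R_def zdvd_not_zless dest: zdvd_imp_le)

lemma R_mod: "t \<in> R \<Longrightarrow> t mod p = t"
  by (auto simp: R_def)

lemma sqcount: assumes s: "s \<in> R"
  shows "int (card {t\<in>R. t^2 mod p = s}) = 1 + chi s"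
proof (cases "s = 0")
  case True
  have A: "t = 0" if t: "t \<in> R" "t^2 mod p = s" for t
  proof -
    have "p dvd t^2" using True t by (simp add: dvd_eq_mod_eq_0)
    then have "p dvd t" using pp prime_dvd_power by blast
    then show "t = 0" using R_dvd t by blast
  qed
  have "0 \<in> R" using p3 by (simp add: R_def)
  then have "{t\<in>R. t^2 mod p = s} = {0}" using A True by auto
  then show ?thesis using True chi_0_iff[of 0] by simp
next
  case False
  then have nd: "\<not> p dvd s" using R_dvd s by blast
  show ?thesis
  proof (cases "QuadRes p s")
    case True
    then obtain y where y: "[y^2 = s] (mod p)" unfolding QuadRes_def by blast
    define t0 where "t0 = y mod p"
    have t0R: "t0 \<in> R" using p3 by (simp add: t0_def R_def)
    have t0s: "t0^2 mod p = s"
    proof -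
      have "[t0^2 = y^2] (mod p)" unfolding t0_def by (intro cong_pow) (simp add: cong_def)
      then have "[t0^2 = s] (mod p)" using y cong_trans by blast
      then show ?thesis using R_mod[OF s] by (simp add: cong_def)
    qed
    have t0nz: "t0 \<noteq> 0" using t0s False by auto
    have t1R: "p - t0 \<in> R" using t0R t0nz by (auto simp: R_def)
    have t1s: "(p - t0)^2 mod p = s"
    proof -
      have "(p - t0)^2 = t0^2 + p * (p - 2*t0)" by (simp add: power2_eq_square algebra_simps)
      then show ?thesis using t0s by simp
    qed
    have odd: "odd p" using pp p3 prime_odd_int[of p] by auto
    have neq: "t0 \<noteq> p - t0" using odd by (metis add_diff_cancel_left' dvd_triv_left mult_2 diff_add_cancel)
    have B: "t = t0" if t: "t \<in> R" "t^2 mod p = s" "t \<noteq> p - t0" for t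
    proof -
      have "[t^2 = t0^2] (mod p)" using t(2) t0s by (simp add: cong_def)
      then have "p dvd (t - t0) * (t + t0)" by (simp add: cong_iff_dvd_diff power2_eq_square algebra_simps)
      then have "p dvd (t - t0) \<or> p dvd (t + t0)" using pp by (simp add: prime_dvd_mult_iff)
      then show "t = t0"
      proof
        assume "p dvd (t - t0)"
        then have "[t = t0] (mod p)" by (simp add: cong_iff_dvd_diff)
        then show ?thesis using t(1) t0R R_mod by (metis cong_def)
      next
        assume d: "p dvd (t + t0)"
        have "0 < t + t0" "t + t0 < 2 * p" using t(1) t0R t0nz by (auto simp: R_def)
        then obtain k where k: "t + t0 = p * k" using d by (auto elim: dvdE)
        then have "0 < k" "k < 2" using \<open>0 < t + t0\<close> \<open>t + t0 < 2 * p\<close> p3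
          by (auto simp: zero_less_mult_iff)
        then have "k = 1" by simp
        then have "t = p - t0" using k by simp
        then show ?thesis using t(3) by simp
      qed
    qed
    have "{t\<in>R. t^2 mod p = s} = {t0, p - t0}" using B t0R t0s t1R t1s by auto
    then have "card {t\<in>R. t^2 mod p = s} = 2" using neq by simp
    moreover have "chi s = 1" using True nd unfolding chi_def Legendre_def by (simp add: cong_0_iff)
    ultimately show ?thesis by simp
  next
    case False
    have D: False if "t \<in> R" "t^2 mod p = s" for t
    proof -
      from that have "[t^2 = s] (mod p)" using R_mod[OF s] by (simp add: cong_def)
      then show False using False unfolding QuadRes_def by blast
    qed
    have "{t\<in>R. t^2 mod p = s} = {}" using D by auto
    moreover have "chi s = -1" using False nd unfolding chi_def Legendre_def by (simp add: cong_0_iff)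
    ultimately show ?thesis by simp
  qed
qed

lemma sq_sum:
  assumes per: "\<And>x. F (x mod p) = F x"
  shows "(\<Sum>t\<in>R. F (t^2)) = (\<Sum>s\<in>R. (1 + chi s) * F s)"
proof -
  have "(\<Sum>t\<in>R. F (t^2)) = (\<Sum>t\<in>R. F (t^2 mod p))" by (simp add: per)
  also have "\<dots> = (\<Sum>s\<in>R. \<Sum>t\<in>{t\<in>R. t^2 mod p = s}. F (t^2 mod p))"
    by (rule sum.group[symmetric]) (use p3 in \<open>auto simp: R_def\<close>)
  also have "\<dots> = (\<Sum>s\<in>R. \<Sum>t\<in>{t\<in>R. t^2 mod p = s}. F s)"
    by (intro sum.cong refl) auto
  also have "\<dots> = (\<Sum>s\<in>R. (1 + chi s) * F s)"
    by (intro sum.cong refl) (simp add: sqcount[symmetric])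
  finally show ?thesis .
qed

end


context pctx begin

lemma p_dvd_pow: "p dvd x ^ n \<Longrightarrow> p dvd x"
  using pp prime_dvd_power by blast

lemma cube_inj:
  assumes m3: "p mod 3 = 2" and c: "[x^3 = y^3] (mod p)"
  shows "[x = y] (mod p)"
proof (cases "p dvd x \<or> p dvd y")
  case True
  then have "p dvd x^3 \<or> p dvd y^3" by (metis dvd_mult power3_eq_cube)
  then have "p dvd x^3 \<and> p dvd y^3" using c by (metis cong_dvd_iff)
  then have "p dvd x \<and> p dvd y" using p_dvd_pow by blast
  then show ?thesis by (simp add: cong_iff_dvd_diff)
next
  case False
  obtain m where m: "2 * k2 = 3 * m + 1"
  proof -
    have "p = 2 + 3 * ((p - 2) div 3)" using m3 by presburger
    then have "int (2*k2) = 3 * ((p - 2) div 3) + 1" using two_k2 by simp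
    moreover have "(p - 2) div 3 \<ge> 0" using p3 by simp
    ultimately have "2*k2 = 3 * nat ((p - 2) div 3) + 1" by linarith
    then show ?thesis using that by blast
  qed
  have ex: "[(x^3)^m * x = 1] (mod p)"
  proof -
    have "[x^(3*m+1) = 1] (mod p)" using pow_pm1[of x, unfolded m] False by simp
    moreover have "(x^3)^m * x = x^(3*m+1)" by (simp only: power_mult[symmetric] power_add power_one_right)
    ultimately show ?thesis by metis
  qed
  have ey: "[(y^3)^m * y = 1] (mod p)"
  proof -
    have "[y^(3*m+1) = 1] (mod p)" using pow_pm1[of y, unfolded m] False by simp
    moreover have "(y^3)^m * y = y^(3*m+1)" by (simp only: power_mult[symmetric] power_add power_one_right)
    ultimately show ?thesis by metis
  qed
  have "[(x^3)^m * y = (y^3)^m * y] (mod p)" by (rule cong_mult[OF cong_pow[OF c] cong_refl])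
  then have ey': "[(x^3)^m * y = 1] (mod p)" using ey cong_trans by blast
  have "[x = x * ((x^3)^m * y)] (mod p)" using cong_sym[OF cong_mult[OF cong_refl[of x] ey']] by simp
  also have "x * ((x^3)^m * y) = ((x^3)^m * x) * y" by (simp add: algebra_simps)
  also have "[((x^3)^m * x) * y = 1 * y] (mod p)" using ex by (intro cong_mult) auto
  finally show ?thesis by simp
qed

lemma omega:
  assumes m3: "p mod 3 = 1"
  shows "\<exists>w. [w^3 = 1] (mod p) \<and> \<not> p dvd (w - 1) \<and> p dvd (w^2 + w + 1) \<and> \<not> p dvd w \<and> \<not> p dvd (w + 1)"
proof -
  obtain g where nd: "\<not> p dvd g" and h: "\<And>k. 0 < k \<Longrightarrow> k < nat (p-1) \<Longrightarrow> \<not> [g^k = 1] (mod p)"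
    using primroot by blast
  obtain m where m: "2 * k2 = 3 * m" and m0: "0 < m"
  proof -
    have "p - 1 = 3 * ((p - 1) div 3)" using m3 by presburger
    then have "int (2*k2) = 3 * ((p - 1) div 3)" using two_k2 by simp
    moreover have "(p - 1) div 3 > 0" using p3 by simp
    ultimately have "2*k2 = 3 * nat ((p - 1) div 3)" "0 < nat ((p - 1) div 3)" by linarith+
    then show ?thesis using that by blast
  qed
  define w where "w = g^m"
  have w3: "[w^3 = 1] (mod p)" using pow_pm1[OF nd] unfolding m by (simp add: w_def power_mult[symmetric] mult.commute)
  have "m < nat (p - 1)" using m m0 two_k2 by linarith
  then have w1: "\<not> [w = 1] (mod p)" using h m0 by (simp add: w_def)
  then have nd1: "\<not> p dvd (w - 1)" by (simp add: cong_iff_dvd_diff)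
  have "p dvd (w^3 - 1)" using w3 by (simp add: cong_iff_dvd_diff)
  moreover have "w^3 - 1 = (w - 1) * (w^2 + w + 1)" by (simp add: algebra_simps power2_eq_square power3_eq_cube)
  ultimately have dE: "p dvd (w^2 + w + 1)" using nd1 pp by (simp add: prime_dvd_mult_iff)
  have ndw: "\<not> p dvd w"
  proof
    assume "p dvd w"
    then have "p dvd w^3" by (metis dvd_mult power3_eq_cube)
    then have "p dvd 1" using w3 by (metis cong_dvd_iff)
    then show False using p3 by simp
  qed
  have "\<not> p dvd (w + 1)"
  proof
    assume "p dvd (w + 1)"
    then have "p dvd (w^2 + w + 1) - (w + 1)" using dE by (rule dvd_diff[rotated])
    then have "p dvd w^2" by simp
    then show False using ndw p_dvd_pow by blast
  qed
  then show ?thesis using w3 nd1 dE ndw by blast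
qed

lemma cube_card_2:
  assumes m3: "p mod 3 = 2" and x: "x \<in> R"
  shows "card {y\<in>R. [x^3 = y^3] (mod p)} = 1"
proof -
  have "{y\<in>R. [x^3 = y^3] (mod p)} = {x}"
  proof -
    have "y = x" if "y \<in> R" "[x^3 = y^3] (mod p)" for y
      using cube_inj[OF m3 that(2)] by (simp add: cong_def R_mod[OF x] R_mod[OF that(1)])
    then show ?thesis using x by auto
  qed
  then show ?thesis by simp
qed

lemma cube_card_1:
  assumes m3: "p mod 3 = 1" and x: "x \<in> R" and x0: "x \<noteq> 0"
  shows "card {y\<in>R. [x^3 = y^3] (mod p)} = 3"
proof -
  obtain w where w3: "[w^3 = 1] (mod p)" and nd1: "\<not> p dvd (w - 1)" and dE: "p dvd (w^2 + w + 1)"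
    and ndw: "\<not> p dvd w" and ndw1: "\<not> p dvd (w + 1)"
    using omega[OF m3] by blast
  have ndx: "\<not> p dvd x" using x x0 R_dvd by blast
  define a where "a = (x*w) mod p"
  define b where "b = (x*w^2) mod p"
  have aR: "a \<in> R" and bR: "b \<in> R" using p3 by (auto simp: a_def b_def R_def)
  have w6: "[w^6 = 1] (mod p)"
  proof -
    have "[(w^3)^2 = 1^2] (mod p)" using w3 by (rule cong_pow)
    then show ?thesis by (simp add: power_mult[symmetric])
  qed
  have ca: "[x^3 = a^3] (mod p)"
  proof -
    have "[a^3 = (x*w)^3] (mod p)" unfolding a_def by (intro cong_pow) (simp add: cong_def)
    moreover have "[(x*w)^3 = x^3 * 1] (mod p)" using cong_mult[OF cong_refl[of "x^3"] w3] by (simp add: power_mult_distrib)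
    ultimately have "[a^3 = x^3 * 1] (mod p)" by (rule cong_trans)
    then have "[a^3 = x^3] (mod p)" by simp
    then show ?thesis by (rule cong_sym)
  qed
  have cb: "[x^3 = b^3] (mod p)"
  proof -
    have "[b^3 = (x*w^2)^3] (mod p)" unfolding b_def by (intro cong_pow) (simp add: cong_def)
    moreover have "[(x*w^2)^3 = x^3 * 1] (mod p)" using cong_mult[OF cong_refl[of "x^3"] w6]
      by (simp add: power_mult_distrib power_mult[symmetric])
    ultimately have "[b^3 = x^3 * 1] (mod p)" by (rule cong_trans)
    then have "[b^3 = x^3] (mod p)" by simp
    then show ?thesis by (rule cong_sym)
  qed
  have memb: "y = x \<or> y = a \<or> y = b" if y: "y \<in> R" "[x^3 = y^3] (mod p)" for y
  proof -
    have id: "(y - x) * (y - x*w) * (y - x*w^2) = (y^3 - x^3) - (w^2 + w + 1) * x * y * (y - x) + (w^3 - 1) * x^2 * (y - x)"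
      by (simp add: algebra_simps power2_eq_square power3_eq_cube)
    have h1: "p dvd (y^3 - x^3)" using y(2) by (simp add: cong_iff_dvd_diff dvd_diff_commute)
    have h2: "p dvd (w^2 + w + 1) * x * y * (y - x)" using dE by simp
    have h3: "p dvd (w^3 - 1) * x^2 * (y - x)" using w3 by (simp add: cong_iff_dvd_diff)
    have "p dvd (y - x) * (y - x*w) * (y - x*w^2)" unfolding id by (rule dvd_add[OF dvd_diff[OF h1 h2] h3])
    then have "p dvd (y - x) \<or> p dvd (y - x*w) \<or> p dvd (y - x*w^2)" using pp by (simp add: prime_dvd_mult_iff)
    then have "[y = x] (mod p) \<or> [y = x*w] (mod p) \<or> [y = x*w^2] (mod p)" by (simp add: cong_iff_dvd_diff)
    then show ?thesis by (auto simp: cong_def R_mod[OF x] R_mod[OF y(1)] a_def b_def)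
  qed
  have d1: "x \<noteq> a"
  proof
    assume "x = a"
    then have "[x*w = x] (mod p)" by (simp add: a_def cong_def R_mod[OF x])
    then have "p dvd x * (w - 1)" by (simp add: cong_iff_dvd_diff algebra_simps)
    then show False using ndx nd1 pp by (simp add: prime_dvd_mult_iff)
  qed
  have d2: "x \<noteq> b"
  proof
    assume "x = b"
    then have "[x*w^2 = x] (mod p)" by (simp add: b_def cong_def R_mod[OF x])
    then have "p dvd x * (w - 1) * (w + 1)" by (simp add: cong_iff_dvd_diff algebra_simps power2_eq_square)
    then show False using ndx nd1 ndw1 pp by (simp add: prime_dvd_mult_iff)
  qed
  have d3: "a \<noteq> b"
  proof
    assume "a = b"
    then have "[x*w^2 = x*w] (mod p)" by (simp add: a_def b_def cong_def)
    then have "p dvd x * w * (w - 1)" by (simp add: cong_iff_dvd_diff algebra_simps power2_eq_square)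
    then show False using ndx nd1 ndw pp by (simp add: prime_dvd_mult_iff)
  qed
  have "{y\<in>R. [x^3 = y^3] (mod p)} = {x, a, b}" using memb x aR bR ca cb by auto
  then show ?thesis using d1 d2 d3 by simp
qed

end


context pctx begin

definition b :: "int \<Rightarrow> int" where "b s = (\<Sum>x\<in>R. chi (x^3 + s))"

lemma b_per: "b (s mod p) = b s"
  unfolding b_def by (intro sum.cong refl chi_cong) (simp add: cong_def mod_add_right_eq)

lemma A2_eq: "A2 p = (\<Sum>t\<in>R. (b (t^2))^2)"
  unfolding A2_def a_coef_def b_def R_def chi_def by simp

lemma chi_per3: "chi ((x mod p)^3 + c) = chi (x^3 + c)"
  by (intro chi_cong cong_add cong_pow cong_refl) (simp add: cong_def)

lemma b_scale: assumes nd: "\<not> p dvd g" shows "b (g^3 * s) = chi g * b s"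
proof -
  have "b (g^3 * s) = (\<Sum>x\<in>R. chi ((g*x+0)^3 + g^3 * s))" unfolding b_def
    by (rule reindex[symmetric, OF _ nd]) (rule chi_per3)
  also have "\<dots> = (\<Sum>x\<in>R. chi g * chi (x^3 + s))"
  proof (intro sum.cong refl)
    fix x
    have "(g*x+0)^3 + g^3 * s = g^3 * (x^3 + s)" by (simp add: algebra_simps power_mult_distrib)
    then show "chi ((g*x+0)^3 + g^3 * s) = chi g * chi (x^3 + s)" by (simp add: chi_mult chi_cube)
  qed
  also have "\<dots> = chi g * b s" unfolding b_def by (simp add: sum_distrib_left)
  finally show ?thesis .
qed

lemma twist0: "(\<Sum>s\<in>R. chi s * (b s)^2) = 0"
proof -
  obtain g where g: "chi g = -1" using nonres by blast
  then have nd: "\<not> p dvd g" using chi_0_iff[of g] by auto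
  then have nd3: "\<not> p dvd g^3" using p_dvd_pow by blast
  have "(\<Sum>s\<in>R. chi s * (b s)^2) = (\<Sum>s\<in>R. chi (g^3*s+0) * (b (g^3*s+0))^2)"
    by (rule reindex[symmetric, OF _ nd3]) (simp add: b_per)
  also have "\<dots> = (\<Sum>s\<in>R. - (chi s * (b s)^2))"
  proof (intro sum.cong refl)
    fix s
    show "chi (g^3*s+0) * (b (g^3*s+0))^2 = - (chi s * (b s)^2)"
      using b_scale[OF nd, of s] g by (simp add: chi_mult chi_cube power_mult_distrib)
  qed
  also have "\<dots> = - (\<Sum>s\<in>R. chi s * (b s)^2)" by (simp add: sum_negf)
  finally show ?thesis by simp
qed

lemma sum_b2: "(\<Sum>s\<in>R. (b s)^2) = (\<Sum>x\<in>R. p * int (card {y\<in>R. [x^3 = y^3] (mod p)}) - p)"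
proof -
  have "(\<Sum>s\<in>R. (b s)^2) = (\<Sum>s\<in>R. \<Sum>x\<in>R. \<Sum>y\<in>R. chi (x^3 + s) * chi (y^3 + s))"
    unfolding b_def power2_eq_square by (simp add: sum_product)
  also have "\<dots> = (\<Sum>x\<in>R. \<Sum>s\<in>R. \<Sum>y\<in>R. chi (x^3 + s) * chi (y^3 + s))"
    by (rule sum.swap)
  also have "\<dots> = (\<Sum>x\<in>R. \<Sum>y\<in>R. \<Sum>s\<in>R. chi (s + x^3) * chi (s + y^3))"
    by (subst sum.swap) (simp add: add.commute)
  also have "\<dots> = (\<Sum>x\<in>R. \<Sum>y\<in>R. p * (if [x^3 = y^3] (mod p) then 1 else 0) - 1)"
    by (intro sum.cong refl) (simp add: C_gen)
  also have "\<dots> = (\<Sum>x\<in>R. p * int (card {y\<in>R. [x^3 = y^3] (mod p)}) - p)"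
  proof (intro sum.cong refl)
    fix x
    have "(\<Sum>y\<in>R. p * (if [x^3 = y^3] (mod p) then 1 else 0) - 1)
        = p * (\<Sum>y\<in>R. (if [x^3 = y^3] (mod p) then 1 else 0)) - int (card R)"
      by (simp add: sum_subtractf sum_distrib_left)
    also have "(\<Sum>y\<in>R. (if [x^3 = y^3] (mod p) then 1 else 0)) = int (card {y\<in>R. [x^3 = y^3] (mod p)})"
      by (simp add: sum.If_cases Int_def)
    finally show "(\<Sum>y\<in>R. p * (if [x^3 = y^3] (mod p) then 1 else 0) - 1) = p * int (card {y\<in>R. [x^3 = y^3] (mod p)}) - p"
      using cardR p3 by simp
  qed
  finally show ?thesis .
qed

lemma A2_main: "A2 p = (\<Sum>x\<in>R. p * int (card {y\<in>R. [x^3 = y^3] (mod p)}) - p)"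
proof -
  have "A2 p = (\<Sum>s\<in>R. (1 + chi s) * (b s)^2)"
    unfolding A2_eq by (rule sq_sum) (simp add: b_per)
  also have "\<dots> = (\<Sum>s\<in>R. (b s)^2) + (\<Sum>s\<in>R. chi s * (b s)^2)"
    by (simp add: distrib_right sum.distrib)
  also have "\<dots> = (\<Sum>s\<in>R. (b s)^2)" using twist0 by simp
  finally show ?thesis using sum_b2 by simp
qed

lemma case2: "p mod 3 = 2 \<Longrightarrow> A2 p = 0"
  unfolding A2_main by (simp add: cube_card_2)

lemma case1: assumes m3: "p mod 3 = 1" shows "A2 p = 2 * p^2 - 2 * p"
proof -
  have z: "0 \<in> R" using p3 by (simp add: R_def)
  have "A2 p = (p * int (card {y\<in>R. [0^3 = y^3] (mod p)}) - p) + (\<Sum>x\<in>R - {0}. p * int (card {y\<in>R. [x^3 = y^3] (mod p)}) - p)"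
    unfolding A2_main by (rule sum.remove[OF finR z])
  also have "card {y\<in>R. [0^3 = y^3] (mod p)} = 1"
  proof -
    have "{y\<in>R. [0^3 = y^3] (mod p)} = {0}"
    proof -
      have "y = 0" if "y \<in> R" "[0^3 = y^3] (mod p)" for y
      proof -
        have "p dvd y^3" using cong_sym[OF that(2)] by (simp add: cong_0_iff)
        then show ?thesis using p_dvd_pow R_dvd that(1) by blast
      qed
      then show ?thesis using z by auto
    qed
    then show ?thesis by simp
  qed
  also have "(\<Sum>x\<in>R - {0}. p * int (card {y\<in>R. [x^3 = y^3] (mod p)}) - p) = (\<Sum>x\<in>R - {0}. 2 * p)"
    by (intro sum.cong refl) (simp add: cube_card_1[OF m3])
  also have "\<dots> = (p - 1) * (2 * p)" using cardR p3 z by (simp add: card_Diff_singleton)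
  finally show ?thesis by (simp add: algebra_simps power2_eq_square)
qed

end

theorem mainTheorem4:
  fixes p :: int
  assumes "prime p" and "p > 3"
  shows "([p = 1] (mod 3) \<longrightarrow> A2 p = 2 * p^2 - 2 * p) \<and>
         ([p = 2] (mod 3) \<longrightarrow> A2 p = 0)"
proof -
  interpret pctx p using assms by unfold_locales
  show ?thesis using case1 case2 by (simp add: cong_def)
qed


end
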